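(* Let $n\ge 2$, and let $S$ be a semitransitive subsemigroup of $\mathcal{I}_n\setminus\mathcal{S}_n$ with $|S|\le 2n$, let $g,h$ be its two non-zero idempotents, and let $S'=gSg\cup gSh\cup hSg\cup hSh$. Let $\varphi\in S'$ be nilpotent. Then for every $x\in\mathrm{dom}(\varphi)$, if $x\in X_i$ and $x\varphi\in X_j$, then $j>i$. In particular, a nilpotent element of $S'$ has no arrow from a transitivity block to itself.
   Context: $\mathcal{I}_n$ denotes the symmetric inverse semigroup of all partial injective maps of $X=\{1,\dots,n\}$ to itself, with maps written on the right and composed left to right; $0$ denotes the empty map, and $\varphi$ is nilpotent if $\varphi^k=0$ for some $k$. $\mathcal{S}_n$ is the symmetric group on $X$. A semigroup $S$ of partial transformations of $X$ is semitransitive if for all $x,y\in X$ there is $\varphi\in S$ with $x\varphi=y$ or $y\varphi=x$. It is known that such an $S$ (semitransitive in $\mathcal{I}_n\setminus\mathcal{S}_n$, $|S|\le 2n$) has exactly two non-zero idempotents $g,h$, with disjoint domains whose union is $X$. For $x,y\in X$ write $x\ge y$ if $x\varphi=y$ for some $\varphi\in S$; this is a total preorder, and its equivalence classes are the transitivity blocks $X_1,\dots,X_m$, numbered so that for $x\in X_i$, $y\in X_j$ one has $x\ge y$ iff $i\le j$. An element $\alpha$ has an arrow $x\to y$ if $x\in\mathrm{dom}(\alpha)$ and $x\alpha=y$. *)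

theory Defs
  imports Main
begin

text \<open>Partial transformations of X = {1..n} are represented as maps nat => nat option.
  Maps are written on the right and composed left to right: x(f g) = (x f) g.\<close>

type_synonym pmap = "nat \<Rightarrow> nat option"

definition X :: "nat \<Rightarrow> nat set" where
  "X n = {1..n}"

definition in_In :: "nat \<Rightarrow> pmap \<Rightarrow> bool" where
  "in_In n f \<longleftrightarrow> dom f \<subseteq> X n \<and> ran f \<subseteq> X n \<and> inj_on f (dom f)"

definition in_Sn :: "nat \<Rightarrow> pmap \<Rightarrow> bool" where
  "in_Sn n f \<longleftrightarrow> in_In n f \<and> dom f = X n \<and> ran f = X n"

definition pcomp :: "pmap \<Rightarrow> pmap \<Rightarrow> pmap" where
  "pcomp f g = g \<circ>\<^sub>m f"

text \<open>Powers f^(k+1).\<close>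
fun ppow :: "nat \<Rightarrow> pmap \<Rightarrow> pmap" where
  "ppow 0 f = f"
| "ppow (Suc k) f = pcomp (ppow k f) f"

definition nilpotent :: "pmap \<Rightarrow> bool" where
  "nilpotent f \<longleftrightarrow> (\<exists>k. ppow k f = Map.empty)"

definition idempotent :: "pmap \<Rightarrow> bool" where
  "idempotent e \<longleftrightarrow> pcomp e e = e"

definition subsemigroup_In :: "nat \<Rightarrow> pmap set \<Rightarrow> bool" where
  "subsemigroup_In n S \<longleftrightarrow> S \<noteq> {} \<and> (\<forall>f\<in>S. in_In n f)
     \<and> (\<forall>f\<in>S. \<forall>g\<in>S. pcomp f g \<in> S)"

definition semitransitive :: "nat \<Rightarrow> pmap set \<Rightarrow> bool" where
  "semitransitive n S \<longleftrightarrow>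
     (\<forall>x\<in>X n. \<forall>y\<in>X n. \<exists>\<phi>\<in>S. \<phi> x = Some y \<or> \<phi> y = Some x)"

definition reach :: "pmap set \<Rightarrow> nat \<Rightarrow> nat \<Rightarrow> bool" where
  "reach S x y \<longleftrightarrow> (\<exists>\<phi>\<in>S. \<phi> x = Some y)"

text \<open>A numbering of the transitivity blocks: blk x = i means x \<in> X_i, and
  for x \<in> X_i, y \<in> X_j we have x \<ge> y iff i \<le> j.\<close>
definition block_numbering :: "nat \<Rightarrow> pmap set \<Rightarrow> (nat \<Rightarrow> nat) \<Rightarrow> bool" where
  "block_numbering n S blk \<longleftrightarrow>
     blk ` X n = {1..card (blk ` X n)} \<and>
     (\<forall>x\<in>X n. \<forall>y\<in>X n. reach S x y \<longleftrightarrow> blk x \<le> blk y)"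

definition S_prime :: "pmap set \<Rightarrow> pmap \<Rightarrow> pmap \<Rightarrow> pmap set" where
  "S_prime S g h = {pcomp (pcomp a s) b | a s b. a \<in> {g, h} \<and> s \<in> S \<and> b \<in> {g, h}}"

end

theory Submission
  imports Defs
begin


lemma pcomp_apply: "pcomp f g x = (case f x of None \<Rightarrow> None | Some y \<Rightarrow> g y)"
  by (simp add: pcomp_def map_comp_def)

lemma pcomp_assoc: "pcomp (pcomp a b) c = pcomp a (pcomp b c)"
  by (rule ext) (simp add: pcomp_apply split: option.split)

lemma ppow_Suc': "ppow (Suc k) f = pcomp f (ppow k f)"
  by (induction k) (simp_all add: pcomp_assoc)

lemma ppow_add: "pcomp (ppow a f) (ppow b f) = ppow (a+b+1) f"
proof (induction b)
  case 0 then show ?case by simp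
next
  case (Suc b)
  have "pcomp (ppow a f) (ppow (Suc b) f) = pcomp (pcomp (ppow a f) (ppow b f)) f"
    by (simp add: pcomp_assoc)
  also have "\<dots> = ppow (Suc (a+b+1)) f" using Suc by simp
  finally show ?case by simp
qed

lemma ppow_in: "\<forall>f\<in>S. \<forall>g\<in>S. pcomp f g \<in> S \<Longrightarrow> f \<in> S \<Longrightarrow> ppow k f \<in> S"
  by (induction k) auto

lemma ppow_fix: "f x = Some x \<Longrightarrow> ppow k f x = Some x"
  by (induction k) (simp_all add: pcomp_apply)

lemma ppow_shift: "ppow i f = ppow j f \<Longrightarrow> ppow (i+r) f = ppow (j+r) f"
  by (induction r) simp_all

lemma ppow_period:
  assumes "ppow i f = ppow j f" "i < j" "i \<le> a"
  shows "ppow a f = ppow (a + m*(j-i)) f"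
proof (induction m)
  case 0 then show ?case by simp
next
  case (Suc m)
  obtain r where r: "a + m*(j-i) = i + r" using assms(3) by (metis le_Suc_ex trans_le_add1)
  have "a + Suc m*(j-i) = (i + r) + (j - i)" using r by simp
  hence "ppow (a + Suc m*(j-i)) f = ppow ((i + r) + (j - i)) f" by (metis)
  also have "\<dots> = ppow (j + r) f" using assms(2) by (simp add: algebra_simps)
  also have "\<dots> = ppow (i + r) f" using ppow_shift[OF assms(1)] by simp
  finally show ?case using Suc r by simp
qed

lemma idem_power:
  assumes cl: "\<forall>f\<in>S. \<forall>g\<in>S. pcomp f g \<in> S" and fin: "finite S" and f: "f \<in> S"
  shows "\<exists>k. idempotent (ppow k f)"
proof -
  have "(\<lambda>i. ppow i f) ` UNIV \<subseteq> S" using ppow_in[OF cl f] by auto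
  hence "finite ((\<lambda>i. ppow i f) ` UNIV)" using fin finite_subset by blast
  hence "\<not> inj (\<lambda>i. ppow i f)" using finite_imageD infinite_UNIV_nat by blast
  then obtain i j where ij: "i \<noteq> j" "ppow i f = ppow j f" unfolding inj_def by blast
  then obtain i j where ij: "i < j" "ppow i f = ppow j f"
    by (metis linorder_neqE_nat)
  define p where "p = j - i"
  have p: "p > 0" using ij p_def by simp
  define K where "K = p*(i+1) - 1"
  have K1: "K + 1 = p*(i+1)" using p K_def by simp
  hence Ki: "i \<le> K" using p by (metis add_le_cancel_right less_one mult_le_mono1 mult_1 not_less not_gr_zero)
  have "K + K + 1 = K + (i+1)*p" using K1 by (simp add: algebra_simps)
  hence "pcomp (ppow K f) (ppow K f) = ppow (K + (i+1)*p) f"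
    using ppow_add[of K f K] by metis
  also have "\<dots> = ppow K f" using ppow_period[OF ij(2) ij(1) Ki, of "i+1"] p_def by simp
  finally show ?thesis unfolding idempotent_def by blast
qed

lemma idem_mult:
  assumes "idempotent (ppow k w)"
  shows "ppow (m*(k+1)+k) w = ppow k w"
proof (induction m)
  case 0 then show ?case by simp
next
  case (Suc m)
  have "ppow (Suc m*(k+1)+k) w = ppow ((m*(k+1)+k) + k + 1) w" by (simp add: algebra_simps)
  also have "\<dots> = pcomp (ppow (m*(k+1)+k) w) (ppow k w)" using ppow_add by metis
  also have "\<dots> = ppow k w" using Suc assms unfolding idempotent_def by simp
  finally show ?case .
qed

lemma idem_partial_id:
  assumes "in_In n e" "idempotent e" "e z = Some w"
  shows "w = z"
proof -
  have "pcomp e e z = e w" using assms(3) by (simp add: pcomp_apply)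
  hence "e w = Some w" using assms(2,3) unfolding idempotent_def by simp
  moreover have "inj_on e (dom e)" using assms(1) unfolding in_In_def by simp
  ultimately show ?thesis using assms(3) unfolding inj_on_def by (metis domI)
qed

lemma ppow_def_at: "ppow k w z \<noteq> None \<Longrightarrow> w z \<noteq> None"
  by (induction k) (auto simp: pcomp_apply split: option.splits)

lemma comm_pow: "pcomp \<phi> (ppow k (pcomp \<psi> \<phi>)) = pcomp (ppow k (pcomp \<phi> \<psi>)) \<phi>"
proof (induction k)
  case 0 then show ?case by (simp add: pcomp_assoc)
next
  case (Suc k)
  have "pcomp \<phi> (ppow (Suc k) (pcomp \<psi> \<phi>)) = pcomp (pcomp \<phi> (ppow k (pcomp \<psi> \<phi>))) (pcomp \<psi> \<phi>)"
    by (simp add: pcomp_assoc)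
  also have "\<dots> = pcomp (ppow (Suc k) (pcomp \<phi> \<psi>)) \<phi>" using Suc by (simp add: pcomp_assoc)
  finally show ?case .
qed

lemma into:
  assumes "e = ppow k (pcomp \<phi> \<psi>)" "f = ppow k (pcomp \<psi> \<phi>)" "e z = Some z"
  shows "\<exists>s. \<phi> z = Some s \<and> f s = Some s"
proof -
  have "pcomp \<phi> \<psi> z \<noteq> None" using ppow_def_at[of k "pcomp \<phi> \<psi>" z] assms by simp
  then obtain s where s: "\<phi> z = Some s" by (auto simp: pcomp_apply split: option.splits)
  have "pcomp e \<phi> z = Some s" using assms(3) s by (simp add: pcomp_apply)
  hence "pcomp \<phi> f z = Some s" using comm_pow[of \<phi> k \<psi>] assms(1,2) by simp
  hence "f s = Some s" using s by (simp add: pcomp_apply)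
  with s show ?thesis by blast
qed

lemma bridge:
  assumes cl: "\<forall>f\<in>S. \<forall>g\<in>S. pcomp f g \<in> S" and "\<phi> \<in> S" "\<psi> \<in> S"
    and "e = ppow (Suc Q) (pcomp \<phi> \<psi>)" "f = ppow (Suc Q) (pcomp \<psi> \<phi>)" "e t = Some t"
  shows "\<exists>s. f s = Some s \<and> (\<exists>\<mu>\<in>S. \<mu> s = Some t)"
proof -
  obtain s where s: "\<phi> t = Some s" "f s = Some s" using into[OF assms(4,5,6)] by blast
  define \<mu> where "\<mu> = pcomp \<psi> (ppow Q (pcomp \<phi> \<psi>))"
  have "\<mu> \<in> S" unfolding \<mu>_def using cl assms(2,3) ppow_in[OF cl] by blast
  have "e = pcomp \<phi> \<mu>" unfolding \<mu>_def assms(4) ppow_Suc' by (simp add: pcomp_assoc)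
  hence "\<mu> s = Some t" using assms(6) s(1) by (simp add: pcomp_apply)
  with s(2) \<open>\<mu> \<in> S\<close> show ?thesis by blast
qed

lemma card_X: "card (X n) = n" by (simp add: X_def)

lemma count_contra:
  assumes cl: "\<forall>f\<in>S. \<forall>g\<in>S. pcomp f g \<in> S" and fin: "finite S" and cS: "card S \<le> 2*n"
    and eS: "e \<in> S" and fS: "f \<in> S" and et: "e t = Some t" and fs: "f s = Some s"
    and pide: "\<And>z w. e z = Some w \<Longrightarrow> w = z"
    and disj: "e s = None"
    and emp: "Map.empty \<in> S" and top: "\<forall>v\<in>X n. reach S t v"
    and \<mu>S: "\<mu> \<in> S" and \<mu>s: "\<mu> s = Some t"
  shows False
proof -
  obtain \<sigma> where \<sigma>: "\<forall>v\<in>X n. \<sigma> v \<in> S \<and> \<sigma> v t = Some v"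
    using top unfolding reach_def by metis
  define A where "A = (\<lambda>v. pcomp e (\<sigma> v)) ` X n"
  define B where "B = (\<lambda>v. pcomp (pcomp f \<mu>) (\<sigma> v)) ` X n"
  have Aat: "pcomp e (\<sigma> v) t = Some v" if "v \<in> X n" for v using \<sigma> that et by (simp add: pcomp_apply)
  have Bat: "pcomp (pcomp f \<mu>) (\<sigma> v) s = Some v" if "v \<in> X n" for v
    using \<sigma> that fs \<mu>s by (simp add: pcomp_apply)
  have Ans: "a s = None" if "a \<in> A" for a using that disj unfolding A_def by (auto simp: pcomp_apply)
  have "inj_on (\<lambda>v. pcomp e (\<sigma> v)) (X n)"
  proof (rule inj_onI)
    fix v w assume v: "v \<in> X n" "w \<in> X n" and eq: "pcomp e (\<sigma> v) = pcomp e (\<sigma> w)"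
    from eq have "(pcomp e (\<sigma> v)) t = (pcomp e (\<sigma> w)) t" by simp
    thus "v = w" using Aat[OF v(1)] Aat[OF v(2)] by simp
  qed
  hence "card A = card (X n)" unfolding A_def by (rule card_image)
  hence cA: "card A = n" by (simp add: card_X)
  have "inj_on (\<lambda>v. pcomp (pcomp f \<mu>) (\<sigma> v)) (X n)"
  proof (rule inj_onI)
    fix v w assume v: "v \<in> X n" "w \<in> X n" and eq: "pcomp (pcomp f \<mu>) (\<sigma> v) = pcomp (pcomp f \<mu>) (\<sigma> w)"
    from eq have "(pcomp (pcomp f \<mu>) (\<sigma> v)) s = (pcomp (pcomp f \<mu>) (\<sigma> w)) s" by simp
    thus "v = w" using Bat[OF v(1)] Bat[OF v(2)] by simp
  qed
  hence "card B = card (X n)" unfolding B_def by (rule card_image)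
  hence cB: "card B = n" by (simp add: card_X)
  have AB: "A \<inter> B = {}" using Ans Bat unfolding B_def by fastforce
  have eA: "Map.empty \<notin> A" unfolding A_def
  proof
    assume "Map.empty \<in> (\<lambda>v. pcomp e (\<sigma> v)) ` X n"
    then obtain v where "v \<in> X n" "Map.empty = pcomp e (\<sigma> v)" by blast
    thus False using Aat[of v] by (metis option.distinct(1))
  qed
  have eB: "Map.empty \<notin> B" unfolding B_def
  proof
    assume "Map.empty \<in> (\<lambda>v. pcomp (pcomp f \<mu>) (\<sigma> v)) ` X n"
    then obtain v where "v \<in> X n" "Map.empty = pcomp (pcomp f \<mu>) (\<sigma> v)" by blast
    thus False using Bat[of v] by (metis option.distinct(1))
  qed
  have sub: "insert Map.empty (A \<union> B) \<subseteq> S"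
    using emp \<sigma> cl eS fS \<mu>S unfolding A_def B_def by auto
  have fAB: "finite A" "finite B" unfolding A_def B_def by (simp_all add: X_def)
  have "card (insert Map.empty (A \<union> B)) = 2*n + 1"
    using cA cB AB eA eB fAB by (simp add: card_Un_disjoint)
  moreover have "card (insert Map.empty (A \<union> B)) \<le> card S" using card_mono[OF fin sub] .
  ultimately show False using cS by simp
qed



theorem lemma3p2:
  fixes n :: nat and S :: "pmap set" and g h \<phi> :: pmap and blk :: "nat \<Rightarrow> nat"
  assumes "n \<ge> 2"
    and "subsemigroup_In n S"
    and "\<forall>f\<in>S. \<not> in_Sn n f"
    and "semitransitive n S"
    and "finite S" and "card S \<le> 2 * n"
    and "g \<in> S" and "h \<in> S" and "g \<noteq> h"
    and "idempotent g" and "idempotent h"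
    and "g \<noteq> Map.empty" and "h \<noteq> Map.empty"
    and "\<forall>e\<in>S. idempotent e \<and> e \<noteq> Map.empty \<longrightarrow> e = g \<or> e = h"
    and "block_numbering n S blk"
    and "\<phi> \<in> S_prime S g h" and "nilpotent \<phi>"
  shows "(\<forall>x\<in>dom \<phi>. blk x < blk (the (\<phi> x)))
       \<and> (\<forall>x\<in>dom \<phi>. blk (the (\<phi> x)) \<noteq> blk x)"
proof -
  have cl: "\<forall>f\<in>S. \<forall>g\<in>S. pcomp f g \<in> S" and inI: "\<forall>f\<in>S. in_In n f"
    using assms(2) unfolding subsemigroup_In_def by auto
  have fin: "finite S" by fact
  have pid: "w = z" if "e \<in> S" "idempotent e" "e z = Some w" for e z w
    using idem_partial_id[of n e z w] inI that by blast
  have two: "e = g \<or> e = h" if "e \<in> S" "idempotent e" "e z = Some z" for e z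
    using assms(14) that by fastforce
  have domX: "dom f \<subseteq> X n" "ran f \<subseteq> X n" if "f \<in> S" for f
    using inI that unfolding in_In_def by auto
  have cover: "z \<in> dom g \<or> z \<in> dom h" if z: "z \<in> X n" for z
  proof -
    obtain \<sigma> where \<sigma>: "\<sigma> \<in> S" "\<sigma> z = Some z"
      using assms(4) z unfolding semitransitive_def by blast
    obtain k where k: "idempotent (ppow k \<sigma>)" using idem_power[OF cl fin \<sigma>(1)] by blast
    have "ppow k \<sigma> z = Some z" using ppow_fix[of \<sigma> z k] \<sigma>(2) by simp
    moreover have "ppow k \<sigma> \<in> S" using ppow_in[OF cl \<sigma>(1)] .
    ultimately show ?thesis using two[OF _ k] by (metis domI)
  qed
  have disj: "dom g \<inter> dom h = {}"
  proof (rule ccontr)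
    assume "dom g \<inter> dom h \<noteq> {}"
    then obtain z where z: "z \<in> dom g" "z \<in> dom h" by blast
    have gid: "g u = Some u" if "u \<in> dom g" for u using pid[OF assms(7,10)] that by fastforce
    have hid: "h u = Some u" if "u \<in> dom h" for u using pid[OF assms(8,11)] that by fastforce
    have gh_app: "pcomp g h u = (if u \<in> dom g \<and> u \<in> dom h then Some u else None)" for u
      by (cases "g u"; cases "h u") (auto simp: pcomp_apply dest: pid[OF assms(7,10)] pid[OF assms(8,11)])
    have ghS: "pcomp g h \<in> S" using cl assms(7,8) by blast
    have "idempotent (pcomp g h)" unfolding idempotent_def
      by (rule ext) (simp only: pcomp_apply[of "pcomp g h" "pcomp g h"] gh_app, auto)
    moreover have "pcomp g h z = Some z" using gh_app z by simp
    ultimately have "pcomp g h = g \<or> pcomp g h = h" using two[OF ghS] by blast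
    then show False
    proof
      assume eq: "pcomp g h = g"
      have "dom h = X n"
      proof
        show "dom h \<subseteq> X n" using domX assms(8) by blast
        show "X n \<subseteq> dom h"
        proof
          fix u assume u: "u \<in> X n"
          show "u \<in> dom h"
          proof (cases "u \<in> dom g")
            case True
            hence "pcomp g h u \<noteq> None" using eq by auto
            thus ?thesis using gh_app by (auto split: if_splits)
          qed (use cover u in blast)
        qed
      qed
      moreover have "ran h = dom h" using hid unfolding ran_def dom_def by force
      ultimately have "in_Sn n h" using inI assms(8) unfolding in_Sn_def by simp
      thus False using assms(3,8) by blast
    next
      assume eq: "pcomp g h = h"
      have "dom g = X n"
      proof
        show "dom g \<subseteq> X n" using domX assms(7) by blast
        show "X n \<subseteq> dom g"
        proof
          fix u assume u: "u \<in> X n"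
          show "u \<in> dom g"
          proof (cases "u \<in> dom h")
            case True
            hence "pcomp g h u \<noteq> None" using eq by auto
            thus ?thesis using gh_app by (auto split: if_splits)
          qed (use cover u in blast)
        qed
      qed
      moreover have "ran g = dom g" using gid unfolding ran_def dom_def by force
      ultimately have "in_Sn n g" using inI assms(7) unfolding in_Sn_def by simp
      thus False using assms(3,7) by blast
    qed
  qed
  have \<phi>S: "\<phi> \<in> S" using assms(16) cl assms(7,8) unfolding S_prime_def by blast
  obtain t where t: "t \<in> X n" "\<forall>v\<in>X n. reach S t v"
  proof -
    have ne: "X n \<noteq> {}" using assms(1) by (auto simp: X_def)
    have fX: "finite (X n)" by (simp add: X_def)
    obtain t where t: "t \<in> X n" "\<forall>v\<in>X n. blk t \<le> blk v"
      using ex_min_if_finite[of "X n"] fX ne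
      by (metis arg_min_if_finite(1) arg_min_least not_le)
    then show ?thesis using that assms(15) unfolding block_numbering_def by blast
  qed
  have main: "blk x < blk y" if xy: "\<phi> x = Some y" for x y
  proof -
    have x: "x \<in> X n" and y: "y \<in> X n" using xy domX[OF \<phi>S] by (auto simp: ran_def)
    have "blk x \<le> blk y" using assms(15) x y \<phi>S xy unfolding block_numbering_def reach_def by blast
    moreover have "\<not> blk y \<le> blk x"
    proof
      assume "blk y \<le> blk x"
      then obtain \<psi> where \<psi>: "\<psi> \<in> S" "\<psi> y = Some x"
        using assms(15) x y unfolding block_numbering_def reach_def by blast
      define w1 where "w1 = pcomp \<phi> \<psi>"
      define w2 where "w2 = pcomp \<psi> \<phi>"
      have w1S: "w1 \<in> S" and w2S: "w2 \<in> S" using cl \<phi>S \<psi> unfolding w1_def w2_def by auto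
      obtain k1 where k1: "idempotent (ppow k1 w1)" using idem_power[OF cl fin w1S] by blast
      obtain k2 where k2: "idempotent (ppow k2 w2)" using idem_power[OF cl fin w2S] by blast
      define P where "P = k2*(k1+1)+k1"
      have P2: "P = k1*(k2+1)+k2" unfolding P_def by (simp add: algebra_simps)
      define Q where "Q = 2*P"
      define e where "e = ppow (Suc Q) w1"
      define f where "f = ppow (Suc Q) w2"
      have e1: "ppow P w1 = ppow k1 w1" unfolding P_def using idem_mult[OF k1] .
      have f1: "ppow P w2 = ppow k2 w2" unfolding P2 using idem_mult[OF k2] .
      have "e = pcomp (ppow P w1) (ppow P w1)" unfolding e_def Q_def using ppow_add[of P w1 P]
        by (simp add: mult_2)
      hence ee: "e = ppow k1 w1" using e1 k1 unfolding idempotent_def by simp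
      have "f = pcomp (ppow P w2) (ppow P w2)" unfolding f_def Q_def using ppow_add[of P w2 P]
        by (simp add: mult_2)
      hence ff: "f = ppow k2 w2" using f1 k2 unfolding idempotent_def by simp
      have eS: "e \<in> S" and fS: "f \<in> S" using ppow_in[OF cl w1S] ppow_in[OF cl w2S] ee ff by auto
      have eI: "idempotent e" and fI: "idempotent f" using ee ff k1 k2 by auto
      have ex: "e x = Some x" unfolding e_def
        by (rule ppow_fix) (simp add: w1_def pcomp_apply xy \<psi>)
      have fy: "f y = Some y" unfolding f_def
        by (rule ppow_fix) (simp add: w2_def pcomp_apply xy \<psi>)
      have eid: "e u = Some u" if "u \<in> dom e" for u using pid[OF eS eI] that by fastforce
      have fid: "f u = Some u" if "u \<in> dom f" for u using pid[OF fS fI] that by fastforce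
      have egh: "e = g \<or> e = h" using two[OF eS eI ex] .
      have fgh: "f = g \<or> f = h" using two[OF fS fI fy] .
      show False
      proof (cases "e = f")
        case True
        have step: "\<exists>s. \<phi> z = Some s \<and> e s = Some s" if "e z = Some z" for z
          using into[OF e_def[unfolded w1_def] f_def[unfolded w2_def] that] True by simp
        have "\<exists>z. ppow k \<phi> x = Some z \<and> e z = Some z" for k
        proof (induction k)
          case 0 then show ?case using step[OF ex] by simp
        next
          case (Suc k)
          then obtain z where z: "ppow k \<phi> x = Some z" "e z = Some z" by blast
          obtain s where "\<phi> z = Some s" "e s = Some s" using step[OF z(2)] by blast
          thus ?case using z by (simp add: pcomp_apply)
        qed
        moreover obtain k where "ppow k \<phi> = Map.empty" using assms(17) unfolding nilpotent_def by blast
        ultimately show False by (metis option.distinct(1))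
      next
        case False
        have dj: "dom e \<inter> dom f = {}" using egh fgh False disj by auto
        have cov: "X n \<subseteq> dom e \<union> dom f" using egh fgh False cover by auto
        have empS: "Map.empty \<in> S"
        proof -
          have "pcomp e f = Map.empty"
          proof
            fix u show "pcomp e f u = None"
            proof (cases "e u")
              case (Some v)
              hence "v = u" "u \<in> dom e" using pid[OF eS eI] by auto
              thus ?thesis using Some dj by (auto simp: pcomp_apply)
            qed (simp add: pcomp_apply)
          qed
          thus ?thesis using cl eS fS by metis
        qed
        show False
        proof (cases "t \<in> dom e")
          case True
          obtain s \<mu> where s: "f s = Some s" "\<mu> \<in> S" "\<mu> s = Some t"
            using bridge[OF cl \<phi>S \<psi>(1) e_def[unfolded w1_def] f_def[unfolded w2_def] eid[OF True]] by blast
          have "e s = None" using s(1) dj by auto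
          show False using count_contra[OF cl fin assms(6) eS fS eid[OF True] s(1) _ \<open>e s = None\<close> empS t(2) s(2,3)]
            pid[OF eS eI] by blast
        next
          case False
          hence tf: "t \<in> dom f" using cov t(1) by auto
          obtain s \<mu> where s: "e s = Some s" "\<mu> \<in> S" "\<mu> s = Some t"
            using bridge[OF cl \<psi>(1) \<phi>S f_def[unfolded w2_def] e_def[unfolded w1_def] fid[OF tf]] by blast
          have "f s = None" using s(1) dj by auto
          show False using count_contra[OF cl fin assms(6) fS eS fid[OF tf] s(1) _ \<open>f s = None\<close> empS t(2) s(2,3)]
            pid[OF fS fI] by blast
        qed
      qed
    qed
    ultimately show ?thesis by simp
  qed
  show ?thesis using main by (metis domD less_irrefl option.sel)
qed

end
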